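(* Let $J$ be a simple current of $\mathcal{A}$, $\psi,\chi,\chi'\in\{0,1\}$ and $i,i'\in I$. Then the fusion coefficient of $\mathcal{A}_{\rm perm}$ satisfies $$N_{(J,\psi)(i,\chi)}^{\phantom{(J,\psi)(i,\chi)}(i',\chi')}=\tfrac12\,N_{Ji}^{\ \ i'}\Big(N_{Ji}^{\ \ i'}+e^{i\pi(\psi+\chi-\chi')}\Big),$$ where $N_{Ji}^{\ \ i'}$ are the fusion coefficients of $\mathcal{A}$. Consequently a diagonal field $(i,\chi)$ is a fixed point of $(J,\psi)$ (i.e. $N_{(J,\psi)(i,\chi)}^{\phantom{(J,\psi)(i,\chi)}(i,\chi)}=1$) if and only if $\psi=0$ and $Ji=i$.
   Context: Let $\mathcal{A}$ be a unitary rational conformal field theory with finite set of primary fields $I$, identity $0\in I$, central charge $c$, conformal weights $h_i$, and modular matrices $S$ (symmetric, unitary, with $S_{0i}\ge S_{00}>0$) and $T=\mathrm{diag}(e^{2\pi i(h_i-c/24)})$; put $P=T^{1/2}ST^{2}ST^{1/2}$. Fusion coefficients of $\mathcal{A}$ are $N_{ij}^{\ \ k}=\sum_{m\in I}S_{im}S_{jm}\overline{S_{km}}/S_{0m}$ (non-negative integers). A simple current $J$ of $\mathcal{A}$ is a field with $S_{J0}=S_{00}$; for each $i$ there is then a unique field $Ji$ with $N_{Ji}^{\ \ k}=\delta_{k,Ji}$. The $\mathbb{Z}_2$ permutation orbifold $\mathcal{A}_{\rm perm}$ has primaries: diagonal $(i,\psi)$ ($i\in I$, $\psi\in\{0,1\}$),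 off-diagonal $\langle i,j\rangle$ (unordered pairs $i\neq j$), twisted $\widehat{(i,\psi)}$; identity $(0,0)$; modular matrix $S^{BHS}$ given by $S^{BHS}_{\langle i,j\rangle\langle p,q\rangle}=S_{ip}S_{jq}+S_{iq}S_{jp}$, $S^{BHS}_{\langle i,j\rangle(p,\psi)}=S_{ip}S_{jp}$, $S^{BHS}_{\langle i,j\rangle\widehat{(p,\psi)}}=0$, $S^{BHS}_{(i,\psi)(j,\chi)}=\tfrac12 S_{ij}^2$, $S^{BHS}_{(i,\psi)\widehat{(p,\chi)}}=\tfrac12 e^{i\pi\psi}S_{ip}$, $S^{BHS}_{\widehat{(p,\psi)}\widehat{(q,\chi)}}=\tfrac12 e^{i\pi(\psi+\chi)}P_{pq}$ (and symmetric). Fusion coefficients of $\mathcal{A}_{\rm perm}$ are defined by the Verlinde formula $N_{AB}^{\ \ C}=\sum_{N}S^{BHS}_{AN}S^{BHS}_{BN}\overline{S^{BHS}_{CN}}/S^{BHS}_{(0,0)N}$, the sum running over all primaries $N$ of $\mathcal{A}_{\rm perm}$. *)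

theory Defs
  imports Complex_Main "HOL-Library.FuncSet"
begin

text \<open>Primary fields of the Z2 permutation orbifold.  Diag i psi with psi in {0,1};
Off A with A a two-element subset {i,j} of primaries (unordered pair i /= j);
Tw p psi the twisted fields.\<close>

datatype 'i perm_prim = Diag 'i nat | Off "'i set" | Tw 'i nat

definition perm_prims :: "('i::finite) perm_prim set" where
  "perm_prims = {Diag i psi | i psi. psi \<in> {0,1}} \<union> {Off A | A. card A = 2}
               \<union> {Tw p psi | p psi. psi \<in> {0,1}}"

definition fus :: "('i::finite \<Rightarrow> 'i \<Rightarrow> complex) \<Rightarrow> 'i \<Rightarrow> 'i \<Rightarrow> 'i \<Rightarrow> 'i \<Rightarrow> complex" where
  "fus S z i j k = (\<Sum>m\<in>UNIV. S i m * S j m * cnj (S k m) / S z m)"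

text \<open>T^(1/2) entries and P = T^(1/2) S T^2 S T^(1/2).\<close>
definition Thalf :: "real \<Rightarrow> ('i \<Rightarrow> real) \<Rightarrow> 'i \<Rightarrow> complex" where
  "Thalf c h i = exp (\<i> * of_real pi * of_real (h i - c / 24))"

definition Pmat :: "('i::finite \<Rightarrow> 'i \<Rightarrow> complex) \<Rightarrow> real \<Rightarrow> ('i \<Rightarrow> real) \<Rightarrow> 'i \<Rightarrow> 'i \<Rightarrow> complex" where
  "Pmat S c h p q = Thalf c h p * (\<Sum>m\<in>UNIV. S p m * (Thalf c h m)^4 * S m q) * Thalf c h q"

definition sgnph :: "nat \<Rightarrow> complex" where
  "sgnph n = exp (\<i> * of_real pi * of_nat n)"

text \<open>Modular S-matrix of the permutation orbifold (BHS).\<close>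
fun SBHS :: "('i::finite \<Rightarrow> 'i \<Rightarrow> complex) \<Rightarrow> real \<Rightarrow> ('i \<Rightarrow> real) \<Rightarrow>
    'i perm_prim \<Rightarrow> 'i perm_prim \<Rightarrow> complex" where
  "SBHS S c h (Off A) (Off B) = (\<Sum>f\<in>{f \<in> A \<rightarrow>\<^sub>E B. bij_betw f A B}. \<Prod>x\<in>A. S x (f x))"
| "SBHS S c h (Off A) (Diag p psi) = (\<Prod>x\<in>A. S x p)"
| "SBHS S c h (Diag p psi) (Off A) = (\<Prod>x\<in>A. S x p)"
| "SBHS S c h (Off A) (Tw p psi) = 0"
| "SBHS S c h (Tw p psi) (Off A) = 0"
| "SBHS S c h (Diag i psi) (Diag j chi) = (1/2) * (S i j)^2"
| "SBHS S c h (Diag i psi) (Tw p chi) = (1/2) * sgnph psi * S i p"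
| "SBHS S c h (Tw p chi) (Diag i psi) = (1/2) * sgnph psi * S i p"
| "SBHS S c h (Tw p psi) (Tw q chi) = (1/2) * sgnph (psi + chi) * Pmat S c h p q"

definition fus_perm :: "('i::finite \<Rightarrow> 'i \<Rightarrow> complex) \<Rightarrow> real \<Rightarrow> ('i \<Rightarrow> real) \<Rightarrow> 'i \<Rightarrow>
    'i perm_prim \<Rightarrow> 'i perm_prim \<Rightarrow> 'i perm_prim \<Rightarrow> complex" where
  "fus_perm S c h z A B C = (\<Sum>N\<in>perm_prims.
      SBHS S c h A N * SBHS S c h B N * cnj (SBHS S c h C N) / SBHS S c h (Diag z 0) N)"

definition sc_act :: "('i::finite \<Rightarrow> 'i \<Rightarrow> complex) \<Rightarrow> 'i \<Rightarrow> 'i \<Rightarrow> 'i \<Rightarrow> 'i" where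
  "sc_act S z J i = (THE k. \<forall>k'. fus S z J i k' = (if k' = k then 1 else 0))"

end

theory Submission imports Defs begin

lemma pairs_sum:
  fixes a :: "'i::finite \<Rightarrow> complex"
  shows "(\<Sum>A\<in>{A. card A = 2}. \<Prod>x\<in>A. a x) = ((\<Sum>p\<in>UNIV. a p)^2 - (\<Sum>p\<in>UNIV. (a p)^2)) / 2"
proof -
  let ?P = "{(p,q). (p::'i) \<noteq> q}"
  have sq: "(\<Sum>p\<in>UNIV. a p)^2 = (\<Sum>p\<in>UNIV. (a p)^2) + (\<Sum>(p,q)\<in>?P. a p * a q)"
  proof -
    have "(\<Sum>p\<in>UNIV. a p)^2 = (\<Sum>(p,q)\<in>UNIV\<times>UNIV. a p * a q)"
      by (simp add: power2_eq_square sum_product sum.cartesian_product)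
    also have "UNIV \<times> UNIV = (\<lambda>p. (p,p)) ` UNIV \<union> ?P" by auto
    also have "(\<Sum>(p,q)\<in>(\<lambda>p. (p,p)) ` UNIV \<union> ?P. a p * a q)
        = (\<Sum>(p,q)\<in>(\<lambda>p. (p,p)) ` UNIV. a p * a q) + (\<Sum>(p,q)\<in>?P. a p * a q)"
      by (rule sum.union_disjoint) auto
    also have "(\<Sum>(p,q)\<in>(\<lambda>p. (p,p)) ` UNIV. a p * a q) = (\<Sum>p\<in>UNIV. (a p)^2)"
      by (subst sum.reindex) (auto simp: inj_on_def power2_eq_square)
    finally show ?thesis .
  qed
  have fin: "finite {A::'i set. card A = 2}" by simp
  have "(\<Sum>(p,q)\<in>?P. a p * a q) = (\<Sum>A\<in>{A. card A = 2}. \<Sum>pq\<in>{pq \<in> ?P. (\<lambda>(p,q). {p,q}) pq = A}. (\<lambda>(p,q). a p * a q) pq)"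
    by (rule sum.group[symmetric]) (auto simp: card_2_iff)
  also have "\<dots> = (\<Sum>A\<in>{A. card A = 2}. 2 * (\<Prod>x\<in>A. a x))"
  proof (rule sum.cong[OF refl])
    fix A :: "'i set" assume "A \<in> {A. card A = 2}"
    then obtain p q where pq: "p \<noteq> q" "A = {p,q}" by (auto simp: card_2_iff)
    have "{pq \<in> ?P. (\<lambda>(p,q). {p,q}) pq = A} = {(p,q),(q,p)}"
      using pq by (auto simp: doubleton_eq_iff)
    then show "(\<Sum>pq\<in>{pq \<in> ?P. (\<lambda>(p,q). {p,q}) pq = A}. (\<lambda>(p,q). a p * a q) pq) = 2 * (\<Prod>x\<in>A. a x)"
      using pq by (simp add: mult.commute)
  qed
  finally show ?thesis using sq by (simp add: sum_distrib_left[symmetric])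
qed


lemma sgnph_eq: "sgnph n = (-1)^n"
  unfolding sgnph_def
  by (metis exp_of_nat_mult exp_pi_i' mult.commute mult.left_commute of_real_of_nat_eq)

lemma main1:
  fixes S :: "'i::finite \<Rightarrow> 'i \<Rightarrow> complex" and z :: 'i and c :: real and h :: "'i \<Rightarrow> real"
    and J i i' :: 'i and psi chi chi' :: nat
  assumes sym: "\<And>a b. S a b = S b a"
    and nz: "\<And>a. S z a \<noteq> 0"
  shows "fus_perm S c h z (Diag J psi) (Diag i chi) (Diag i' chi')
           = (1/2) * fus S z J i i' *
             (fus S z J i i' + sgnph psi * sgnph chi * cnj (sgnph chi'))"
proof -
  define a where "a m = S J m * S i m * cnj (S i' m) / S z m" for m
  define e where "e = sgnph psi * sgnph chi * cnj (sgnph chi')"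
  define F where "F N = SBHS S c h (Diag J psi) N * SBHS S c h (Diag i chi) N * cnj (SBHS S c h (Diag i' chi') N) / SBHS S c h (Diag z 0) N" for N
  have FD: "F (Diag p w) = (a p)^2 / 4" for p w
    using nz[of p] by (simp add: F_def a_def field_simps sym[of z p] power2_eq_square)
  have FT: "F (Tw p w) = e * a p / 4" for p w
    using nz[of p] by (simp add: F_def a_def e_def field_simps sgnph_def)
  have FO: "F (Off A) = (\<Prod>x\<in>A. a x)" for A
    by (simp add: F_def a_def prod.distrib prod_dividef sym)
  let ?D = "(\<lambda>(p,w). Diag p w) ` (UNIV \<times> {0::nat,1})"
  let ?O = "Off ` {A::'i set. card A = 2}"
  let ?T = "(\<lambda>(p,w). Tw p w) ` (UNIV \<times> {0::nat,1})"
  have PP: "perm_prims = ?D \<union> ?O \<union> ?T" unfolding perm_prims_def by auto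
  have "fus_perm S c h z (Diag J psi) (Diag i chi) (Diag i' chi') = sum F (?D \<union> ?O \<union> ?T)"
    unfolding fus_perm_def PP F_def ..
  also have "\<dots> = sum F ?D + sum F ?O + sum F ?T"
    by (subst sum.union_disjoint; (auto)?; subst sum.union_disjoint; auto)
  also have "sum F ?D = (\<Sum>p\<in>UNIV. (a p)^2) / 2"
  proof -
    have "sum F ?D = (\<Sum>(p,w)\<in>UNIV \<times> {0::nat,1}. F (Diag p w))"
      by (subst sum.reindex) (auto simp: inj_on_def case_prod_unfold)
    also have "\<dots> = (\<Sum>p\<in>UNIV. \<Sum>w\<in>{0::nat,1}. F (Diag p w))"
      by (rule sum.cartesian_product[symmetric])
    finally show ?thesis by (simp add: FD sum_divide_distrib)
  qed
  also have "sum F ?T = e * (\<Sum>p\<in>UNIV. a p) / 2"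
  proof -
    have "sum F ?T = (\<Sum>(p,w)\<in>UNIV \<times> {0::nat,1}. F (Tw p w))"
      by (subst sum.reindex) (auto simp: inj_on_def case_prod_unfold)
    also have "\<dots> = (\<Sum>p\<in>UNIV. \<Sum>w\<in>{0::nat,1}. F (Tw p w))"
      by (rule sum.cartesian_product[symmetric])
    finally show ?thesis by (simp add: FT sum_divide_distrib sum_distrib_left)
  qed
  also have "sum F ?O = (\<Sum>A\<in>{A. card A = 2}. \<Prod>x\<in>A. a x)"
    by (subst sum.reindex) (auto simp: inj_on_def FO)
  also have "\<dots> = ((\<Sum>p\<in>UNIV. a p)^2 - (\<Sum>p\<in>UNIV. (a p)^2)) / 2" by (rule pairs_sum)
  finally have "fus_perm S c h z (Diag J psi) (Diag i chi) (Diag i' chi') = (1/2) * sum a UNIV * (sum a UNIV + e)"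
    by (simp add: field_simps power2_eq_square)
  moreover have "fus S z J i i' = sum a UNIV" unfolding fus_def a_def ..
  ultimately show ?thesis by (simp add: e_def)
qed

theorem mainTheorem2:
  fixes S :: "'i::finite \<Rightarrow> 'i \<Rightarrow> complex" and z :: 'i and c :: real and h :: "'i \<Rightarrow> real"
    and J i i' :: 'i and psi chi chi' :: nat
  assumes sym: "\<And>a b. S a b = S b a"
    and unitary: "\<And>a b. (\<Sum>m\<in>UNIV. S a m * cnj (S b m)) = (if a = b then 1 else 0)"
    and S0real: "\<And>a. Im (S z a) = 0"
    and S0pos: "Re (S z z) > 0"
    and S0ge: "\<And>a. Re (S z a) \<ge> Re (S z z)"
    and fus_nat: "\<And>a b k. fus S z a b k \<in> \<nat>"
    and simple: "S J z = S z z"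
    and simple_act: "\<And>a. \<exists>k. \<forall>k'. fus S z J a k' = (if k' = k then 1 else 0)"
    and psi: "psi \<in> {0,1}" and chi: "chi \<in> {0,1}" and chi': "chi' \<in> {0,1}"
  shows "fus_perm S c h z (Diag J psi) (Diag i chi) (Diag i' chi')
           = (1/2) * fus S z J i i' *
             (fus S z J i i' + exp (\<i> * of_real pi * (of_nat psi + of_nat chi - of_nat chi'))) \<and>
         (fus_perm S c h z (Diag J psi) (Diag i chi) (Diag i chi) = 1
           \<longleftrightarrow> psi = 0 \<and> sc_act S z J i = i)"
  proof -
  have nz: "S z a \<noteq> 0" for a
  proof
    assume "S z a = 0" then have "Re (S z a) = 0" by simp
    with S0ge[of a] S0pos show False by simp
  qed
  have cs: "cnj (sgnph n) = sgnph n" if "n \<in> {0,1}" for n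
    using that by (auto simp: sgnph_eq)
  have inv: "sgnph n * sgnph n = 1" if "n \<in> {0,1}" for n
    using that by (auto simp: sgnph_eq)
  have ee: "exp (\<i> * of_real pi * (of_nat psi + of_nat chi - of_nat chi'))
      = sgnph psi * sgnph chi * cnj (sgnph chi')"
  proof -
    have "exp (\<i> * of_real pi * (of_nat psi + of_nat chi - of_nat chi'))
        = sgnph psi * sgnph chi / sgnph chi'"
      unfolding sgnph_def by (simp add: ring_distribs exp_diff exp_add)
    also have "\<dots> = sgnph psi * sgnph chi * cnj (sgnph chi')"
      using chi' by (auto simp: sgnph_eq)
    finally show ?thesis .
  qed
  have P1: "fus_perm S c h z (Diag J psi) (Diag i chi) (Diag i' chi')
           = (1/2) * fus S z J i i' *
             (fus S z J i i' + exp (\<i> * of_real pi * (of_nat psi + of_nat chi - of_nat chi')))"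
    using main1[of S z, OF sym nz] ee by simp
  obtain k where k: "\<forall>k'. fus S z J i k' = (if k' = k then 1 else 0)"
    using simple_act by blast
  have sc: "sc_act S z J i = k"
    unfolding sc_act_def
  proof (rule the_equality)
    show "\<forall>k'. fus S z J i k' = (if k' = k then 1 else 0)" by (rule k)
  next
    fix k2 assume "\<forall>k'. fus S z J i k' = (if k' = k2 then 1 else 0)"
    from this[rule_format, of k] k[rule_format, of k] show "k2 = k"
      by (auto split: if_splits)
  qed
  have P2: "fus_perm S c h z (Diag J psi) (Diag i chi) (Diag i chi)
      = (1/2) * fus S z J i i * (fus S z J i i + sgnph psi)"
    using main1[of S z c h J psi i chi i chi, OF sym nz] cs[OF chi] inv[OF chi]
    by (simp add: mult.assoc)
  have "fus_perm S c h z (Diag J psi) (Diag i chi) (Diag i chi) = 1 \<longleftrightarrow> psi = 0 \<and> k = i"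
    unfolding P2 using k[rule_format, of i] psi by (auto simp: sgnph_eq)
  with P1 sc show ?thesis by auto
qed

end
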